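(* Let $m$ be a positive integer and $p$ a prime such that $m\not\equiv 0\pmod 3$ and $p\equiv 1\pmod 3$. Then there is a constant $\beta>0$ such that for all sufficiently large $X$, \[ \#\{ n \leq X : p_{mp,p}(n)\equiv 1\pmod{2} \} \geq \beta \log\log X . \]
   Context: A partition $\lambda$ of a non-negative integer $n$ is a non-increasing sequence of positive integers (its parts) summing to $n$. For positive integers $A$ and $a$, $\mathrm{mex}_{A,a}(\lambda)$ denotes the smallest positive integer congruent to $a$ modulo $A$ that is not a part of $\lambda$. Then $p_{A,a}(n)$ denotes the number of partitions $\lambda$ of $n$ satisfying $\mathrm{mex}_{A,a}(\lambda)\equiv a \pmod{2A}$. Here $n$ ranges over positive integers. *)

theory Defs
  imports "HOL-Analysis.Analysis" "HOL-Library.Multiset"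
begin

definition partitions :: "nat \<Rightarrow> nat multiset set" where
  "partitions n = {L. (\<forall>x\<in>#L. 0 < x) \<and> sum_mset L = n}"

definition mex :: "nat \<Rightarrow> nat \<Rightarrow> nat multiset \<Rightarrow> nat" where
  "mex A a L = (LEAST k. 0 < k \<and> k mod A = a mod A \<and> k \<notin># L)"

definition p_mex :: "nat \<Rightarrow> nat \<Rightarrow> nat \<Rightarrow> nat" where
  "p_mex A a n = card {L \<in> partitions n. mex A a L mod (2 * A) = a mod (2 * A)}"

end

theory Submission imports Defs "HOL-Library.Z2" begin

declare add_bit_eq_xor[simp del] mult_bit_eq_and[simp del]

lemma even_card_invol:
  assumes "finite S" "\<And>x. x \<in> S \<Longrightarrow> f x \<in> S" "\<And>x. x \<in> S \<Longrightarrow> f (f x) = x"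
    "\<And>x. x \<in> S \<Longrightarrow> f x \<noteq> x"
  shows "even (card S)"
  using assms
proof (induction "card S" arbitrary: S rule: less_induct)
  case less
  show ?case
  proof (cases "S = {}")
    case True then show ?thesis by simp
  next
    case False
    then obtain x where x: "x \<in> S" by blast
    let ?T = "S - {x, f x}"
    have fx: "f x \<in> S" "f x \<noteq> x" using less x by auto
    have sub: "{x, f x} \<subseteq> S" using x fx by auto
    have c2: "card {x, f x} = 2" using fx by simp
    have "card {x, f x} \<le> card S" using card_mono[OF less(2) sub] .
    moreover have "card ?T = card S - card {x, f x}" using card_Diff_subset[OF _ sub] by simp
    ultimately have cT: "card S = card ?T + 2" using c2 by simp
    have "even (card ?T)"
    proof (rule less(1))
      show "card ?T < card S" using cT by simp
      show "finite ?T" using less by simp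
      fix y assume y: "y \<in> ?T"
      show "f y \<in> ?T" using y less(3,4)[of y] less(4)[of x] x by (metis DiffD1 DiffD2 DiffI insert_iff singletonD)
      show "f (f y) = y" using y less by auto
      show "f y \<noteq> y" using y less by auto
    qed
    then show ?thesis using cT by simp
  qed
qed

definition dparts :: "nat \<Rightarrow> nat set set" where
  "dparts n = {D. finite D \<and> 0 \<notin> D \<and> \<Sum>D = n}"

lemma dparts_sub: "dparts n \<subseteq> Pow {1..n}"
proof
  fix D assume "D \<in> dparts n"
  then have D: "finite D" "0 \<notin> D" "\<Sum>D = n" by (auto simp: dparts_def)
  have "x \<le> n" if "x \<in> D" for x using D that member_le_sum[of x D id] by auto
  moreover have "1 \<le> x" if "x \<in> D" for x using D(2) that by (cases x) auto
  ultimately show "D \<in> Pow {1..n}" by auto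
qed

lemma finite_dparts: "finite (dparts n)"
  using dparts_sub finite_subset by blast

definition sig :: "nat set \<Rightarrow> nat" where "sig D = (LEAST t. Max D - t \<notin> D)"

lemma sig_props:
  assumes "finite D" "D \<noteq> {}" "0 \<notin> D"
  shows "1 \<le> sig D" "sig D \<le> Max D" "\<And>t. t < sig D \<Longrightarrow> Max D - t \<in> D" "Max D - sig D \<notin> D"
proof -
  have ex: "Max D - Max D \<notin> D" using assms by simp
  show "Max D - sig D \<notin> D" unfolding sig_def by (rule LeastI[of _ "Max D"], rule ex)
  show "sig D \<le> Max D" unfolding sig_def by (rule Least_le, rule ex)
  show "\<And>t. t < sig D \<Longrightarrow> Max D - t \<in> D" unfolding sig_def using not_less_Least by blast
  have "Max D \<in> D" using assms by simp
  then show "1 \<le> sig D" using \<open>Max D - sig D \<notin> D\<close> by (cases "sig D") auto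
qed

lemma sig_eq:
  assumes "\<And>t. t < k \<Longrightarrow> Max D - t \<in> D" "Max D - k \<notin> D"
  shows "sig D = k"
  unfolding sig_def
proof (rule Least_equality)
  show "Max D - k \<notin> D" by fact
  fix y assume "Max D - y \<notin> D" then show "k \<le> y" using assms(1) by (meson not_le)
qed

definition fr :: "nat set \<Rightarrow> nat set" where
  "fr D = (if Min D \<le> sig D
     then (D - {Min D} - {Max D + 1 - Min D..Max D}) \<union> {Max D + 2 - Min D..Max D + 1}
     else (D - {Max D + 1 - sig D..Max D}) \<union> {Max D - sig D..Max D - 1} \<union> {sig D})"

definition bad :: "nat set \<Rightarrow> bool" where
  "bad D \<longleftrightarrow> (Min D \<le> sig D \<and> Max D + 1 \<le> 2 * Min D) \<or> (sig D < Min D \<and> Max D \<le> 2 * sig D)"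

lemma sum_shift: "\<Sum>{Suc a..Suc b} = \<Sum>{a..b} + card {a..b}"
proof -
  have "\<Sum>{Suc a..Suc b} = (\<Sum>x\<in>{a..b}. Suc x)"
    by (simp only: sum.shift_bounds_cl_Suc_ivl)
  also have "\<dots> = \<Sum>{a..b} + card {a..b}" unfolding Suc_eq_plus1 sum.distrib by simp
  finally show ?thesis .
qed

lemma caseA:
  assumes D: "finite D" "D \<noteq> {}" "0 \<notin> D" and A: "Min D \<le> sig D" and nb: "\<not> bad D"
  defines "D' \<equiv> fr D"
  shows "finite D'" "D' \<noteq> {}" "0 \<notin> D'" "\<Sum>D' = \<Sum>D" "\<not> bad D'" "fr D' = D" "D' \<noteq> D"
proof -
  define M where "M = Max D"
  define s where "s = Min D"
  define \<sigma> where "\<sigma> = sig D"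
  have sp: "1 \<le> \<sigma>" "\<sigma> \<le> M" "\<And>t. t < \<sigma> \<Longrightarrow> M - t \<in> D" "M - \<sigma> \<notin> D"
    using sig_props[OF D] unfolding M_def \<sigma>_def by auto
  have sD: "s \<in> D" "\<And>x. x \<in> D \<Longrightarrow> s \<le> x" using D unfolding s_def by auto
  have MD: "M \<in> D" "\<And>x. x \<in> D \<Longrightarrow> x \<le> M" using D unfolding M_def by auto
  have s\<sigma>: "s \<le> \<sigma>" using A unfolding s_def \<sigma>_def .
  have big: "2 * s \<le> M" using nb A unfolding bad_def s_def M_def \<sigma>_def by auto
  have s1: "1 \<le> s" using sD D(3) by (metis One_nat_def Suc_leI gr0I)
  have top: "{M + 1 - s..M} \<subseteq> D"
  proof
    fix x assume x: "x \<in> {M + 1 - s..M}"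
    then have "M - (M - x) = x" "M - x < \<sigma>" using s\<sigma> by auto
    then show "x \<in> D" using sp(3)[of "M - x"] by simp
  qed
  have D'eq: "D' = (D - {s} - {M + 1 - s..M}) \<union> {M + 2 - s..M + 1}"
    unfolding D'_def fr_def using A unfolding M_def s_def \<sigma>_def by simp
  have mem: "x \<in> D' \<longleftrightarrow> (x \<in> D \<and> x \<noteq> s \<and> x < M + 1 - s) \<or> (M + 2 - s \<le> x \<and> x \<le> M + 1)" for x
    unfolding D'eq using MD by auto
  show fin: "finite D'" unfolding D'eq using D by simp
  have "M + 2 - s \<le> M + 1" using s1 by arith
  then have M1: "M + 1 \<in> D'" using mem[of "M+1"] by simp
  then show ne: "D' \<noteq> {}" by auto
  show "0 \<notin> D'" using mem[of 0] D(3) big by simp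
  have MaxD': "Max D' = M + 1"
  proof (rule Max_eqI[OF fin _ M1])
    fix y assume "y \<in> D'" then show "y \<le> M + 1" using mem[of y] MD(2)[of y] by auto
  qed
  have MinD': "s < Min D'"
  proof -
    have "s < x" if "x \<in> D'" for x
    proof -
      from that[unfolded mem] show ?thesis
      proof
        assume "x \<in> D \<and> x \<noteq> s \<and> x < M + 1 - s" then show ?thesis using sD(2)[of x] by auto
      next
        assume "M + 2 - s \<le> x \<and> x \<le> M + 1" then show ?thesis using big by linarith
      qed
    qed
    then show ?thesis using Min_in[OF fin ne] by blast
  qed
  have sig': "sig D' = s"
  proof (rule sig_eq)
    show "Max D' - t \<in> D'" if "t < s" for t using that mem[of "Max D' - t"] MaxD' by auto
    show "Max D' - s \<notin> D'" using mem[of "Max D' - s"] MaxD' s1 big by auto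
  qed
  show "\<not> bad D'" unfolding bad_def sig' MaxD' using MinD' big by auto
  have sum1: "\<Sum>D = s + \<Sum>{M + 1 - s..M} + \<Sum>(D - {s} - {M + 1 - s..M})"
  proof -
    have "D = insert s ({M + 1 - s..M} \<union> (D - {s} - {M + 1 - s..M}))" using top sD big by auto
    moreover have "s \<notin> {M + 1 - s..M} \<union> (D - {s} - {M + 1 - s..M})" using big by auto
    ultimately have "\<Sum>D = s + \<Sum>({M + 1 - s..M} \<union> (D - {s} - {M + 1 - s..M}))"
      using D(1) by (metis finite_Diff finite_Un finite_atLeastAtMost sum.insert)
    also have "\<dots> = s + (\<Sum>{M + 1 - s..M} + \<Sum>(D - {s} - {M + 1 - s..M}))"
      by (subst sum.union_disjoint) (use D(1) in auto)
    finally show ?thesis by simp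
  qed
  have sum2: "\<Sum>D' = \<Sum>{M + 2 - s..M + 1} + \<Sum>(D - {s} - {M + 1 - s..M})"
    unfolding D'eq by (subst sum.union_disjoint) (use D(1) MD in \<open>auto simp: add.commute\<close>)
  have "\<Sum>{M + 2 - s..M + 1} = \<Sum>{M + 1 - s..M} + s"
  proof -
    have "{M + 2 - s..M + 1} = {Suc (M + 1 - s)..Suc M}" using big s1 by (intro arg_cong2[where f=atLeastAtMost]) auto
    then have "\<Sum>{M + 2 - s..M + 1} = \<Sum>{M + 1 - s..M} + card {M + 1 - s..M}"
      using sum_shift[of "M + 1 - s" M] by (simp only:)
    moreover have "card {M + 1 - s..M} = s" using big by simp
    ultimately show ?thesis by simp
  qed
  then show "\<Sum>D' = \<Sum>D" using sum1 sum2 by simp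
  have "fr D' = (D' - {Max D' + 1 - sig D'..Max D'}) \<union> {Max D' - sig D'..Max D' - 1} \<union> {sig D'}"
    unfolding fr_def using MinD' sig' by auto
  also have "\<dots> = D"
  proof -
    have "x \<in> (D' - {M + 1 + 1 - s..M + 1}) \<union> {M + 1 - s..M + 1 - 1} \<union> {s} \<longleftrightarrow> x \<in> D" for x
      using mem[of x] top sD MD(2)[of x] by auto
    then show ?thesis unfolding MaxD' sig' by blast
  qed
  finally show "fr D' = D" .
  show "D' \<noteq> D"
  proof
    assume "D' = D" then have "Min D' = s" unfolding s_def by simp
    with MinD' show False by simp
  qed
qed


lemma caseB:
  assumes D: "finite D" "D \<noteq> {}" "0 \<notin> D" and B: "\<not> Min D \<le> sig D" and nb: "\<not> bad D"
  defines "D' \<equiv> fr D"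
  shows "finite D'" "D' \<noteq> {}" "0 \<notin> D'" "\<Sum>D' = \<Sum>D" "\<not> bad D'" "fr D' = D" "D' \<noteq> D"
proof -
  define M where "M = Max D"
  define s where "s = Min D"
  define \<sigma> where "\<sigma> = sig D"
  have sp: "1 \<le> \<sigma>" "\<sigma> \<le> M" "\<And>t. t < \<sigma> \<Longrightarrow> M - t \<in> D" "M - \<sigma> \<notin> D"
    using sig_props[OF D] unfolding M_def \<sigma>_def by auto
  have sD: "s \<in> D" "\<And>x. x \<in> D \<Longrightarrow> s \<le> x" using D unfolding s_def by auto
  have MD: "M \<in> D" "\<And>x. x \<in> D \<Longrightarrow> x \<le> M" using D unfolding M_def by auto
  have s\<sigma>: "\<sigma> < s" using B unfolding s_def \<sigma>_def by simp
  have big: "2 * \<sigma> < M" using nb B unfolding bad_def s_def M_def \<sigma>_def by auto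
  have top: "{M + 1 - \<sigma>..M} \<subseteq> D"
  proof
    fix x assume x: "x \<in> {M + 1 - \<sigma>..M}"
    then have "M - (M - x) = x" "M - x < \<sigma>" by auto
    then show "x \<in> D" using sp(3)[of "M - x"] by simp
  qed
  have D'eq: "D' = (D - {M + 1 - \<sigma>..M}) \<union> {M - \<sigma>..M - 1} \<union> {\<sigma>}"
    unfolding D'_def fr_def using B unfolding M_def s_def \<sigma>_def by simp
  have mem: "x \<in> D' \<longleftrightarrow> (x \<in> D \<and> x < M - \<sigma>) \<or> (M - \<sigma> \<le> x \<and> x \<le> M - 1) \<or> x = \<sigma>" for x
  proof -
    have "x \<in> D \<Longrightarrow> x \<noteq> M - \<sigma>" using sp(4) by auto
    then show ?thesis unfolding D'eq using MD(2)[of x] by auto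
  qed
  show fin: "finite D'" unfolding D'eq using D by simp
  have "M - \<sigma> \<le> M - 1" using sp(1) by arith
  then have M1: "M - 1 \<in> D'" using mem[of "M - 1"] by simp
  then show ne: "D' \<noteq> {}" by auto
  show z: "0 \<notin> D'" using mem[of 0] D(3) big sp(1) by auto
  have MaxD': "Max D' = M - 1"
  proof (rule Max_eqI[OF fin _ M1])
    fix y assume "y \<in> D'" then show "y \<le> M - 1" using mem[of y] big by auto
  qed
  have MinD': "Min D' = \<sigma>"
  proof (rule Min_eqI[OF fin])
    show "\<sigma> \<in> D'" using mem[of \<sigma>] by simp
    fix y assume "y \<in> D'" then show "\<sigma> \<le> y" using mem[of y] big sD(2)[of y] s\<sigma> by auto
  qed
  have sig': "\<sigma> \<le> sig D'"
  proof (rule ccontr)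
    assume "\<not> \<sigma> \<le> sig D'"
    then have "Max D' - sig D' \<in> D'" using mem[of "Max D' - sig D'"] MaxD' big by auto
    then show False using sig_props(4)[OF fin ne z] by blast
  qed
  show "\<not> bad D'" unfolding bad_def MaxD' MinD' using sig' big by auto
  have sum1: "\<Sum>D = \<Sum>{M + 1 - \<sigma>..M} + \<Sum>(D - {M + 1 - \<sigma>..M})"
  proof -
    have "D = {M + 1 - \<sigma>..M} \<union> (D - {M + 1 - \<sigma>..M})" using top by auto
    then have "\<Sum>D = \<Sum>({M + 1 - \<sigma>..M} \<union> (D - {M + 1 - \<sigma>..M}))" by (rule arg_cong)
    also have "\<dots> = \<Sum>{M + 1 - \<sigma>..M} + \<Sum>(D - {M + 1 - \<sigma>..M})"
      by (subst sum.union_disjoint) (use D(1) in auto)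
    finally show ?thesis .
  qed
  have sum2: "\<Sum>D' = \<sigma> + (\<Sum>{M - \<sigma>..M - 1} + \<Sum>(D - {M + 1 - \<sigma>..M}))"
  proof -
    have "D' = insert \<sigma> ({M - \<sigma>..M - 1} \<union> (D - {M + 1 - \<sigma>..M}))" unfolding D'eq by blast
    then have "\<Sum>D' = \<Sum>(insert \<sigma> ({M - \<sigma>..M - 1} \<union> (D - {M + 1 - \<sigma>..M})))" by (rule arg_cong)
    also have "\<dots> = \<sigma> + \<Sum>({M - \<sigma>..M - 1} \<union> (D - {M + 1 - \<sigma>..M}))"
    proof (rule sum.insert)
      show "finite ({M - \<sigma>..M - 1} \<union> (D - {M + 1 - \<sigma>..M}))" using D(1) by simp
      show "\<sigma> \<notin> {M - \<sigma>..M - 1} \<union> (D - {M + 1 - \<sigma>..M})" using big sD(2)[of \<sigma>] s\<sigma> by auto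
    qed
    also have "\<Sum>({M - \<sigma>..M - 1} \<union> (D - {M + 1 - \<sigma>..M})) = \<Sum>{M - \<sigma>..M - 1} + \<Sum>(D - {M + 1 - \<sigma>..M})"
    proof (rule sum.union_disjoint)
      { fix x assume x: "x \<in> {M - \<sigma>..M - 1}" "x \<in> D" "x \<notin> {M + 1 - \<sigma>..M}"
        then have "x = M - \<sigma>" using sp(2) by auto
        with x sp(4) have False by simp }
      then show "{M - \<sigma>..M - 1} \<inter> (D - {M + 1 - \<sigma>..M}) = {}" by blast
    qed (use D(1) in auto)
    finally show ?thesis .
  qed
  have "\<Sum>{M + 1 - \<sigma>..M} = \<Sum>{M - \<sigma>..M - 1} + \<sigma>"
  proof -
    have "{M + 1 - \<sigma>..M} = {Suc (M - \<sigma>)..Suc (M - 1)}" using big sp(1) by (intro arg_cong2[where f=atLeastAtMost]) auto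
    then have "\<Sum>{M + 1 - \<sigma>..M} = \<Sum>{M - \<sigma>..M - 1} + card {M - \<sigma>..M - 1}"
      using sum_shift[of "M - \<sigma>" "M - 1"] by (simp only:)
    moreover have "card {M - \<sigma>..M - 1} = \<sigma>" using big sp(1) by simp
    ultimately show ?thesis by linarith
  qed
  then show "\<Sum>D' = \<Sum>D" using sum1 sum2 by simp
  have "fr D' = (D' - {Min D'} - {Max D' + 1 - Min D'..Max D'}) \<union> {Max D' + 2 - Min D'..Max D' + 1}"
    unfolding fr_def using MinD' sig' by auto
  also have "\<dots> = D"
  proof -
    have "x \<in> (D' - {\<sigma>} - {M - 1 + 1 - \<sigma>..M - 1}) \<union> {M - 1 + 2 - \<sigma>..M - 1 + 1} \<longleftrightarrow> x \<in> D" for x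
    proof -
      have e: "M - 1 + 1 - \<sigma> = M - \<sigma>" "M - 1 + 2 - \<sigma> = M + 1 - \<sigma>" "M - 1 + 1 = M" using big sp(1) by auto
      have low: "x \<in> D \<Longrightarrow> \<not> M + 1 - \<sigma> \<le> x \<Longrightarrow> x < M - \<sigma>"
      proof -
        assume "x \<in> D" "\<not> M + 1 - \<sigma> \<le> x"
        moreover then have "x \<noteq> M - \<sigma>" using sp(4) by auto
        ultimately show "x < M - \<sigma>" by arith
      qed
      show ?thesis unfolding e using mem[of x] top MD(2)[of x] s\<sigma> sD(2)[of x] low by auto
    qed
    then show ?thesis unfolding MaxD' MinD' by blast
  qed
  finally show "fr D' = D" .
  show "D' \<noteq> D"
  proof
    assume "D' = D" then have "Min D' = s" unfolding s_def by simp
    with MinD' s\<sigma> show False by simp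
  qed
qed


fun pa :: "nat \<Rightarrow> nat" where
  "pa 0 = 0" | "pa (Suc k) = pa k + 3 * k + 1"

definition pb :: "nat \<Rightarrow> nat" where "pb k = pa k + k"

definition Pent :: "nat \<Rightarrow> bool" where "Pent n \<longleftrightarrow> (\<exists>k. n = pa k \<or> n = pb k)"

lemma pa_smono: "strict_mono pa"
  by (rule strict_monoI_Suc) simp

lemma pa_mono: "i \<le> j \<Longrightarrow> pa i \<le> pa j"
  using pa_smono strict_mono_less_eq by blast

lemma pb_smono: "strict_mono pb"
  by (rule strict_monoI_Suc) (simp add: pb_def)

lemma pb_lt_pa: "pb k < pa (Suc k)" by (simp add: pb_def)

lemma pa_ne_pb: "1 \<le> k' \<Longrightarrow> pa k \<noteq> pb k'"
proof
  assume k': "1 \<le> k'" and e: "pa k = pb k'"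
  show False
  proof (cases "k \<le> k'")
    case True then have "pa k \<le> pa k'" by (rule pa_mono)
    then show False using e k' by (simp add: pb_def)
  next
    case False then have "pa (Suc k') \<le> pa k" by (intro pa_mono) simp
    then show False using e pb_lt_pa[of k'] by simp
  qed
qed

lemma sum_pa: "\<Sum>{k..<2*k} = pa k"
proof (induction k)
  case 0 then show ?case by simp
next
  case (Suc k)
  have "\<Sum>{k..<2*k+2} = \<Sum>{k..<2*k} + 2*k + (2*k+1)"
    by (simp add: sum.atLeastLessThan_Suc)
  moreover have "\<Sum>{k..<2*k+2} = k + \<Sum>{Suc k..<2*k+2}"
    by (subst sum.atLeast_Suc_lessThan) auto
  ultimately have "\<Sum>{Suc k..<2*k+2} = \<Sum>{k..<2*k} + 3*k + 1" by simp
  then show ?case using Suc by simp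
qed

lemma sum_pb: "\<Sum>{Suc k..2*k} = pb k"
proof -
  have e1: "\<Sum>{k..<Suc (2*k)} = \<Sum>{k..<2*k} + 2*k" by (rule sum.atLeastLessThan_Suc) simp
  have e2: "\<Sum>{k..<Suc (2*k)} = k + \<Sum>{Suc k..<Suc (2*k)}" by (rule sum.atLeast_Suc_lessThan) simp
  have e3: "{Suc k..<Suc (2*k)} = {Suc k..2*k}" by auto
  show ?thesis using e1 e2 sum_pa[of k] unfolding e3 pb_def by linarith
qed

lemma bad_interval:
  assumes D: "finite D" "D \<noteq> {}" "0 \<notin> D" and b: "bad D"
  shows "\<exists>k\<ge>1. D = {k..<2*k} \<or> D = {Suc k..2*k}"
proof -
  define M where "M = Max D"
  define s where "s = Min D"
  define \<sigma> where "\<sigma> = sig D"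
  have sp: "1 \<le> \<sigma>" "\<sigma> \<le> M" "\<And>t. t < \<sigma> \<Longrightarrow> M - t \<in> D" "M - \<sigma> \<notin> D"
    using sig_props[OF D] unfolding M_def \<sigma>_def by auto
  have sD: "s \<in> D" "\<And>x. x \<in> D \<Longrightarrow> s \<le> x" using D unfolding s_def by auto
  have MD: "M \<in> D" "\<And>x. x \<in> D \<Longrightarrow> x \<le> M" using D unfolding M_def by auto
  have s1: "1 \<le> s" using sD D(3) by (metis One_nat_def Suc_leI gr0I)
  have top: "{M + 1 - \<sigma>..M} \<subseteq> D"
  proof
    fix x assume x: "x \<in> {M + 1 - \<sigma>..M}"
    then have "M - (M - x) = x" "M - x < \<sigma>" by auto
    then show "x \<in> D" using sp(3)[of "M - x"] by simp
  qed
  have "M + 1 - \<sigma> \<in> D" using top sp by auto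
  then have ts: "s \<le> M + 1 - \<sigma>" using sD(2) by blast
  from b consider "s \<le> \<sigma>" "M + 1 \<le> 2 * s" | "\<sigma> < s" "M \<le> 2 * \<sigma>"
    unfolding bad_def M_def s_def \<sigma>_def by auto
  then show ?thesis
  proof cases
    case 1
    have "D = {s..M}"
    proof
      show "D \<subseteq> {s..M}" using sD MD by auto
      show "{s..M} \<subseteq> D"
      proof
        fix x assume "x \<in> {s..M}"
        then have "x \<in> {M + 1 - \<sigma>..M}" using 1 by auto
        then show "x \<in> D" using top by auto
      qed
    qed
    moreover have "M + 1 = 2 * s" using 1 ts by linarith
    ultimately have "D = {s ..< 2 * s}" by auto
    then show ?thesis using s1 by blast
  next
    case 2
    have "D = {M + 1 - \<sigma>..M}"
    proof
      show "{M + 1 - \<sigma>..M} \<subseteq> D" by (rule top)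
      show "D \<subseteq> {M + 1 - \<sigma>..M}"
      proof
        fix x assume x: "x \<in> D"
        then have "x \<noteq> M - \<sigma>" "\<sigma> < x" using sp(4) sD(2)[of x] 2 by auto
        then show "x \<in> {M + 1 - \<sigma>..M}" using MD(2)[OF x] 2 by auto
      qed
    qed
    moreover have "M = 2 * \<sigma>" using 2 ts by linarith
    ultimately have "D = {Suc \<sigma> .. 2 * \<sigma>}" by auto
    then show ?thesis using sp(1) by blast
  qed
qed

lemma interval_bad1:
  assumes "1 \<le> k" shows "bad {k..<2*k}"
proof -
  let ?I = "{k..<2*k}"
  have mx: "Max ?I = 2*k - 1" using assms by (intro Max_eqI) auto
  have mn: "Min ?I = k" using assms by (intro Min_eqI) auto
  have sg: "sig ?I = k" by (rule sig_eq) (use assms mx in auto)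
  show ?thesis unfolding bad_def mx mn sg using assms by auto
qed

lemma interval_bad2:
  assumes "1 \<le> k" shows "bad {Suc k..2*k}"
proof -
  let ?I = "{Suc k..2*k}"
  have mx: "Max ?I = 2*k" using assms by (intro Max_eqI) auto
  have mn: "Min ?I = Suc k" using assms by (intro Min_eqI) auto
  have sg: "sig ?I = k" by (rule sig_eq) (use assms mx in auto)
  show ?thesis unfolding bad_def mx mn sg using assms by auto
qed


definition dd :: "nat \<Rightarrow> nat" where "dd n = card (dparts n)"

lemma dparts_0: "dparts 0 = {{}}"
  unfolding dparts_def by (auto simp: gr0I)

lemma dparts_ne: "D \<in> dparts n \<Longrightarrow> 0 < n \<Longrightarrow> D \<noteq> {}"
  unfolding dparts_def by auto

lemma bad_dparts:
  assumes "D \<in> dparts n" "0 < n" "bad D"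
  shows "\<exists>k\<ge>1. (D = {k..<2*k} \<and> n = pa k) \<or> (D = {Suc k..2*k} \<and> n = pb k)"
proof -
  have D: "finite D" "0 \<notin> D" "\<Sum>D = n" using assms(1) unfolding dparts_def by auto
  obtain k where "k \<ge> 1" "D = {k..<2*k} \<or> D = {Suc k..2*k}"
    using bad_interval[OF D(1) dparts_ne[OF assms(1,2)] D(2) assms(3)] by blast
  then show ?thesis using D(3) sum_pa[of k] sum_pb[of k] by auto
qed

lemma card_bad: "0 < n \<Longrightarrow> card {D \<in> dparts n. bad D} = (if Pent n then 1 else 0)"
proof -
  assume n: "0 < n"
  let ?B = "{D \<in> dparts n. bad D}"
  show ?thesis
  proof (cases "Pent n")
    case False
    have "?B = {}"
    proof (rule ccontr)
      assume "?B \<noteq> {}"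
      then obtain D where "D \<in> dparts n" "bad D" by auto
      then show False using bad_dparts[of D n] n False unfolding Pent_def by blast
    qed
    then have "card ?B = 0" by (simp only: card.empty)
    then show ?thesis using False by simp
  next
    case True
    then obtain k where k: "n = pa k \<or> n = pb k" unfolding Pent_def by blast
    have k1: "1 \<le> k" using k n by (cases k) (auto simp: pb_def)
    define I where "I = (if n = pa k then {k..<2*k} else {Suc k..2*k})"
    have IB: "I \<in> ?B"
      using k k1 sum_pa[of k] sum_pb[of k] interval_bad1[OF k1] interval_bad2[OF k1]
      unfolding I_def dparts_def by auto
    have "D = I" if D: "D \<in> ?B" for D
    proof -
      obtain k' where k': "k' \<ge> 1" "(D = {k'..<2*k'} \<and> n = pa k') \<or> (D = {Suc k'..2*k'} \<and> n = pb k')"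
        using bad_dparts[of D n] D n by blast
      have ia: "pa k = pa k' \<Longrightarrow> k = k'" using pa_smono strict_mono_eq by blast
      have ib: "pb k = pb k' \<Longrightarrow> k = k'" using pb_smono strict_mono_eq by blast
      show ?thesis using k' k ia ib pa_ne_pb[OF k1] pa_ne_pb[OF k'(1)] unfolding I_def by metis
    qed
    then have "?B = {I}" using IB by blast
    then show ?thesis using True by simp
  qed
qed

lemma dd_parity: "odd (dd n) \<longleftrightarrow> Pent n"
proof (cases "n = 0")
  case True
  then show ?thesis unfolding dd_def Pent_def by (auto simp: dparts_0 intro: exI[of _ 0])
next
  case False
  then have n: "0 < n" by simp
  let ?G = "{D \<in> dparts n. \<not> bad D}"
  let ?B = "{D \<in> dparts n. bad D}"
  have fin: "finite ?G" "finite ?B" using finite_dparts by auto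
  have "dparts n = ?G \<union> ?B" by auto
  then have cd: "dd n = card ?G + card ?B" unfolding dd_def
    using card_Un_disjoint[OF fin] by (metis (mono_tags, lifting) disjoint_iff mem_Collect_eq)
  have evG: "even (card ?G)"
  proof (rule even_card_invol[where f = fr])
    show "finite ?G" by (rule fin)
    fix D assume "D \<in> ?G"
    then have D: "finite D" "D \<noteq> {}" "0 \<notin> D" "\<Sum>D = n" "\<not> bad D"
      using dparts_ne[of D n] n unfolding dparts_def by auto
    have "finite (fr D) \<and> 0 \<notin> fr D \<and> \<Sum>(fr D) = \<Sum>D \<and> \<not> bad (fr D) \<and> fr (fr D) = D \<and> fr D \<noteq> D"
    proof (cases "Min D \<le> sig D")
      case True then show ?thesis using caseA[OF D(1-3) True D(5)] by blast
    next
      case False then show ?thesis using caseB[OF D(1-3) False D(5)] by blast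
    qed
    then show "fr D \<in> ?G" "fr (fr D) = D" "fr D \<noteq> D" using D unfolding dparts_def by auto
  qed
  show ?thesis using cd evG card_bad[OF n] by auto
qed

lemma mem_le_sum_mset: "x \<in># (L::nat multiset) \<Longrightarrow> x \<le> sum_mset L"
  by (auto dest!: multi_member_split)

lemma size_le_sum_mset: "(\<forall>x\<in>#L. 0 < x) \<Longrightarrow> size L \<le> sum_mset (L::nat multiset)"
proof -
  assume a: "\<forall>x\<in>#L. 0 < x"
  have "size L = sum_mset (image_mset (\<lambda>_. 1::nat) L)" by (rule size_eq_sum_mset)
  also have "\<dots> \<le> sum_mset (image_mset (\<lambda>x. x) L)"
    by (rule sum_mset_mono) (use a in auto)
  finally show ?thesis by simp
qed

lemma finite_partitions: "finite (partitions n)"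
proof -
  have "partitions n \<subseteq> (\<Union>k\<in>{..n}. multisets_of_size {1..n} k)"
  proof
    fix L assume "L \<in> partitions n"
    then have L: "\<forall>x\<in>#L. 0 < x" "sum_mset L = n" unfolding partitions_def by auto
    have "set_mset L \<subseteq> {1..n}" using L mem_le_sum_mset[of _ L] by (auto simp: Suc_le_eq)
    moreover have "size L \<le> n" using size_le_sum_mset[OF L(1)] L(2) by simp
    ultimately show "L \<in> (\<Union>k\<in>{..n}. multisets_of_size {1..n} k)"
      unfolding multisets_of_size_def by auto
  qed
  moreover have "finite (\<Union>k\<in>{..n}. multisets_of_size {1..n} k)" by auto
  ultimately show ?thesis using finite_subset by blast
qed

definition pp :: "nat \<Rightarrow> nat" where "pp n = card (partitions n)"

definition gP :: "nat \<times> nat multiset \<times> nat set \<Rightarrow> nat \<times> nat multiset \<times> nat set" where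
  "gP t = (case t of (x, L, D) \<Rightarrow> (let s = Min (set_mset L \<union> D) in
     if s \<in> D then (x + s, add_mset s L, D - {s}) else (x - s, L - {#s#}, insert s D)))"

lemma gP_simp: "gP (x, L, D) = (if Min (set_mset L \<union> D) \<in> D
   then (x + Min (set_mset L \<union> D), add_mset (Min (set_mset L \<union> D)) L, D - {Min (set_mset L \<union> D)})
   else (x - Min (set_mset L \<union> D), L - {#Min (set_mset L \<union> D)#}, insert (Min (set_mset L \<union> D)) D))"
  unfolding gP_def by (simp add: Let_def)

lemma PD_even:
  assumes N: "0 < N"
  shows "even (\<Sum>x\<le>N. pp x * dd (N - x))"
proof -
  define T where "T = (SIGMA x:{..N}. partitions x \<times> dparts (N - x))"
  have finT: "finite T" unfolding T_def
    by (intro finite_SigmaI finite_cartesian_product finite_partitions finite_dparts) auto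
  have cT: "card T = (\<Sum>x\<le>N. pp x * dd (N - x))" unfolding T_def pp_def dd_def
    by (subst card_SigmaI) (auto simp: card_cartesian_product finite_partitions finite_dparts)
  have "even (card T)"
  proof (rule even_card_invol[OF finT, where f = gP])
    fix t assume "t \<in> T"
    then obtain x L D where t: "t = (x, L, D)" and x: "x \<le> N" and L: "\<forall>y\<in>#L. 0 < y" "sum_mset L = x"
      and D: "finite D" "0 \<notin> D" "\<Sum>D = N - x"
      unfolding T_def partitions_def dparts_def by auto
    define U where "U = set_mset L \<union> D"
    have finU: "finite U" unfolding U_def using D by simp
    have neU: "U \<noteq> {}"
    proof
      assume "U = {}" then have "L = {#}" "D = {}" unfolding U_def by auto
      then show False using L D x N by auto
    qed
    define s where "s = Min U"
    have sU: "s \<in> U" "\<And>y. y \<in> U \<Longrightarrow> s \<le> y" unfolding s_def using finU neU by auto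
    have s0: "0 < s" using sU(1) L D(2) unfolding U_def by (auto intro: gr0I)
    have gt: "gP t = (if s \<in> D then (x + s, add_mset s L, D - {s}) else (x - s, L - {#s#}, insert s D))"
      unfolding gP_def t s_def U_def by (simp add: Let_def)
    have "gP t \<in> T \<and> gP (gP t) = t \<and> gP t \<noteq> t"
    proof (cases "s \<in> D")
      case True
      have sle: "s \<le> N - x" using member_le_sum[of s D id] True D by simp
      have gt': "gP t = (x + s, add_mset s L, D - {s})" using gt True by simp
      have in1: "gP t \<in> T" unfolding gt' T_def partitions_def dparts_def
        using x sle L D True s0 by (auto simp: sum_diff1_nat)
      have U': "set_mset (add_mset s L) \<union> (D - {s}) = U" unfolding U_def using True by auto
      have m: "Min (set_mset (add_mset s L) \<union> (D - {s})) = s" using U' s_def by simp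
      have "gP (gP t) = (x + s - s, add_mset s L - {#s#}, insert s (D - {s}))"
        unfolding gt' gP_simp m by simp
      also have "\<dots> = t" using True t by (simp add: insert_absorb)
      finally show ?thesis using in1 gt' t s0 by simp
    next
      case False
      then have sL: "s \<in># L" using sU(1) unfolding U_def by auto
      have sle: "s \<le> x" using mem_le_sum_mset[OF sL] L by simp
      have gt': "gP t = (x - s, L - {#s#}, insert s D)" using gt False by simp
      have sumL: "sum_mset (L - {#s#}) = x - s"
        using sL L(2) by (auto dest!: multi_member_split)
      have in1: "gP t \<in> T" unfolding gt' T_def partitions_def dparts_def
        using x sle L D False s0 sumL by (auto dest: in_diffD)
      obtain L0 where L0: "L = add_mset s L0" using multi_member_split[OF sL] by blast
      have U': "set_mset (L - {#s#}) \<union> insert s D = U" unfolding U_def L0 by auto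
      have m: "Min (set_mset (L - {#s#}) \<union> insert s D) = s" using U' s_def by simp
      have "gP (gP t) = (x - s + s, add_mset s (L - {#s#}), insert s D - {s})"
        unfolding gt' gP_simp m by simp
      also have "\<dots> = t" using False t sle sL by simp
      moreover have "x - s \<noteq> x" using s0 sle by arith
      ultimately show ?thesis using in1 gt' t by simp
    qed
    then show "gP t \<in> T" "gP (gP t) = t" "gP t \<noteq> t" by auto
  qed
  then show ?thesis using cT by simp
qed

lemma of_nat_bit: "(of_nat n :: bit) = of_bool (odd n)"
  by (induction n) auto

lemma of_nat_card_filter: "finite S \<Longrightarrow> (of_nat (card {x\<in>S. P x}) :: 'a::semiring_1) = (\<Sum>x\<in>S. of_bool (P x))"
proof -
  assume f: "finite S"
  have "card {x\<in>S. P x} = (\<Sum>x\<in>{x\<in>S. P x}. 1::nat)" by simp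
  also have "\<dots> = (\<Sum>x\<in>S. if P x then 1 else 0)" by (rule sum.inter_filter[OF f])
  finally show ?thesis by (auto simp: of_nat_sum intro!: sum.cong)
qed

lemma sum_mset_mset_set: "finite S \<Longrightarrow> sum_mset (mset_set S) = \<Sum>(S::nat set)"
  by (induction S rule: finite_induct) auto

definition Jb :: "(nat \<Rightarrow> nat) \<Rightarrow> nat multiset \<Rightarrow> nat" where
  "Jb b L = (LEAST j. b j \<notin># L)"

definition sb :: "(nat \<Rightarrow> nat) \<Rightarrow> nat \<Rightarrow> nat" where
  "sb b j = (\<Sum>i<j. b i)"

locale bseq =
  fixes b :: "nat \<Rightarrow> nat"
  assumes smono: "strict_mono b" and b0: "0 < b 0"
begin

lemma b_ge: "i + b 0 \<le> b i"
proof (induction i)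
  case (Suc i) then show ?case using smono[unfolded strict_mono_def, rule_format, of i "Suc i"] by simp
qed simp

lemma b_pos: "0 < b i" using b_ge[of i] b0 by simp

lemma J_ex: "b (sum_mset L + 1) \<notin># L"
proof
  assume "b (sum_mset L + 1) \<in># L"
  then have "b (sum_mset L + 1) \<le> sum_mset L" by (rule mem_le_sum_mset)
  then show False using b_ge[of "sum_mset L + 1"] by simp
qed

lemma J_notin: "b (Jb b L) \<notin># L"
  unfolding Jb_def by (rule LeastI[of _ "sum_mset L + 1"], rule J_ex)

lemma J_in: "i < Jb b L \<Longrightarrow> b i \<in># L"
  unfolding Jb_def using not_less_Least by blast

lemma J_iff: "(\<forall>i<j. b i \<in># L) \<longleftrightarrow> j \<le> Jb b L"
proof
  assume a: "\<forall>i<j. b i \<in># L"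
  show "j \<le> Jb b L"
  proof (rule ccontr)
    assume "\<not> j \<le> Jb b L" then show False using a J_notin[of L] by auto
  qed
next
  assume "j \<le> Jb b L" then show "\<forall>i<j. b i \<in># L" using J_in by auto
qed

lemma J_le: "L \<in> partitions n \<Longrightarrow> Jb b L \<le> n"
proof (cases "Jb b L")
  case (Suc k)
  assume L: "L \<in> partitions n"
  have "b k \<in># L" using J_in[of k L] Suc by simp
  then have "b k \<le> n" using mem_le_sum_mset[of "b k" L] L unfolding partitions_def by simp
  then show ?thesis using b_ge[of k] b0 Suc by simp
qed simp

definition Bm :: "nat \<Rightarrow> nat multiset" where "Bm j = mset_set (b ` {..<j})"

lemma inj_b: "inj b" using smono strict_mono_imp_inj_on by blast

lemma sum_Bm: "sum_mset (Bm j) = sb b j"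
  unfolding Bm_def sb_def using inj_b
  by (simp add: sum_mset_mset_set sum.reindex inj_on_subset[OF inj_b])

lemma Bm_sub: "Bm j \<subseteq># L \<longleftrightarrow> (\<forall>i<j. b i \<in># L)"
proof
  assume "Bm j \<subseteq># L"
  then show "\<forall>i<j. b i \<in># L" unfolding Bm_def
    by (metis finite_imageI finite_lessThan image_eqI lessThan_iff mset_subset_eqD finite_set_mset_mset_set)
next
  assume a: "\<forall>i<j. b i \<in># L"
  show "Bm j \<subseteq># L" unfolding Bm_def subseteq_mset_def
  proof
    fix x show "count (mset_set (b ` {..<j})) x \<le> count L x"
      using a by (auto simp: count_mset_set' Suc_le_eq)
  qed
qed

lemma sb_ge: "j \<le> sb b j"
proof -
  have "j = (\<Sum>i<j. 1::nat)" by simp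
  also have "\<dots> \<le> sb b j" unfolding sb_def by (rule sum_mono) (use b_pos in \<open>auto simp: Suc_le_eq\<close>)
  finally show ?thesis .
qed

lemma sb_smono: "strict_mono (sb b)"
  by (rule strict_monoI_Suc) (simp add: sb_def b_pos)

lemma card_G: "card {L \<in> partitions n. \<forall>i<j. b i \<in># L} = (if sb b j \<le> n then pp (n - sb b j) else 0)"
proof -
  let ?S = "{L \<in> partitions n. Bm j \<subseteq># L}"
  have eq: "{L \<in> partitions n. \<forall>i<j. b i \<in># L} = ?S" using Bm_sub by auto
  show ?thesis
  proof (cases "sb b j \<le> n")
    case False
    have "?S = {}"
    proof (rule ccontr)
      assume "?S \<noteq> {}"
      then obtain L where L: "L \<in> partitions n" "Bm j \<subseteq># L" by auto
      then obtain C where "L = Bm j + C" by (auto simp: subset_mset.le_iff_add)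
      then have "sum_mset (Bm j) \<le> n" using L(1) unfolding partitions_def by auto
      then show False using False sum_Bm by simp
    qed
    then show ?thesis using eq False by (simp only: card.empty) simp
  next
    case True
    have "bij_betw (\<lambda>L. L - Bm j) ?S (partitions (n - sb b j))"
    proof (rule bij_betw_byWitness[where f' = "\<lambda>M. M + Bm j"])
      show "\<forall>L\<in>?S. L - Bm j + Bm j = L" by (auto simp: subset_mset.diff_add)
      show "\<forall>M\<in>partitions (n - sb b j). M + Bm j - Bm j = M" by simp
      show "(\<lambda>L. L - Bm j) ` ?S \<subseteq> partitions (n - sb b j)"
        unfolding partitions_def using sum_Bm by (auto simp: sum_mset_diff dest: in_diffD)
      show "(\<lambda>M. M + Bm j) ` partitions (n - sb b j) \<subseteq> ?S"
        unfolding partitions_def using sum_Bm True b_pos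
        by (auto simp: Bm_def)
    qed
    then have "card ?S = pp (n - sb b j)" unfolding pp_def by (rule bij_betw_same_card)
    then show ?thesis using eq True by simp
  qed
qed

lemma parity_sum: "(of_nat (card {L \<in> partitions n. even (Jb b L)}) :: bit) =
   (\<Sum>j\<le>n. of_nat (if sb b j \<le> n then pp (n - sb b j) else 0))"
proof -
  let ?P = "partitions n"
  have fP: "finite ?P" by (rule finite_partitions)
  have "(\<Sum>j\<le>n. (of_nat (if sb b j \<le> n then pp (n - sb b j) else 0) :: bit))
      = (\<Sum>j\<le>n. of_nat (card {L \<in> ?P. j \<le> Jb b L}))"
    using card_G J_iff by (intro sum.cong) (auto simp del: of_nat_eq_iff)
  also have "\<dots> = (\<Sum>j\<le>n. \<Sum>L\<in>?P. (of_bool (j \<le> Jb b L) :: bit))"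
    by (intro sum.cong refl of_nat_card_filter[OF fP])
  also have "\<dots> = (\<Sum>L\<in>?P. \<Sum>j\<le>n. (of_bool (j \<le> Jb b L) :: bit))" by (rule sum.swap)
  also have "\<dots> = (\<Sum>L\<in>?P. of_bool (even (Jb b L)))"
  proof (rule sum.cong)
    fix L assume L: "L \<in> ?P"
    have "(\<Sum>j\<le>n. (of_bool (j \<le> Jb b L) :: bit)) = of_nat (card {j \<in> {..n}. j \<le> Jb b L})"
      by (rule of_nat_card_filter[symmetric]) simp
    also have "{j \<in> {..n}. j \<le> Jb b L} = {..Jb b L}" using J_le[OF L] by auto
    finally show "(\<Sum>j\<le>n. (of_bool (j \<le> Jb b L) :: bit)) = of_bool (even (Jb b L))"
      by (simp add: of_nat_bit)
  qed simp
  also have "\<dots> = of_nat (card {L \<in> ?P. even (Jb b L)})"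
    by (rule of_nat_card_filter[OF fP, symmetric])
  finally show ?thesis by simp
qed

lemma PD_bit: "(\<Sum>y\<le>M. (of_nat (pp y * dd (M - y)) :: bit)) = of_bool (M = 0)"
proof (cases "M = 0")
  case True
  have "partitions 0 = {{#}}"
  proof -
    have "L = {#}" if "L \<in> partitions 0" for L
    proof (rule ccontr)
      assume "L \<noteq> {#}"
      then obtain y where y: "y \<in># L" by (meson multiset_nonemptyE)
      then have "y \<le> 0" using mem_le_sum_mset[OF y] that unfolding partitions_def by simp
      then show False using y that unfolding partitions_def by auto
    qed
    then show ?thesis unfolding partitions_def by auto
  qed
  then have "pp 0 = 1" unfolding pp_def by simp
  moreover have "dd 0 = 1" unfolding dd_def dparts_0 by simp
  ultimately show ?thesis using True by simp
next
  case False
  then have "even (\<Sum>y\<le>M. pp y * dd (M - y))" using PD_even by simp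
  then have "(of_nat (\<Sum>y\<le>M. pp y * dd (M - y)) :: bit) = 0" by (simp add: of_nat_bit)
  then show ?thesis using False by (simp add: of_nat_sum del: of_nat_mult)
qed

definition G' :: "nat \<Rightarrow> nat \<Rightarrow> nat" where
  "G' j x = (if sb b j \<le> x then pp (x - sb b j) else 0)"

lemma inner: "(\<Sum>x\<le>N. (of_nat (G' j x) * of_nat (dd (N - x)) :: bit)) = of_bool (sb b j = N)"
proof (cases "sb b j \<le> N")
  case False
  then have "\<And>x. x \<le> N \<Longrightarrow> G' j x = 0" unfolding G'_def by auto
  then show ?thesis using False by simp
next
  case True
  define c where "c = sb b j"
  have "(\<Sum>x\<le>N. (of_nat (G' j x) * of_nat (dd (N - x)) :: bit))
      = (\<Sum>x\<in>{c..N}. (of_nat (pp (x - c)) * of_nat (dd (N - x)) :: bit))"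
  proof (rule sum.mono_neutral_cong_right)
    show "\<forall>x\<in>{..N} - {c..N}. (of_nat (G' j x) * of_nat (dd (N - x)) :: bit) = 0"
      unfolding G'_def c_def by auto
    show "\<And>x. x \<in> {c..N} \<Longrightarrow> (of_nat (G' j x) * of_nat (dd (N - x)) :: bit) = of_nat (pp (x - c)) * of_nat (dd (N - x))"
      unfolding G'_def c_def by auto
  qed auto
  also have "\<dots> = (\<Sum>y\<in>{0..N - c}. (of_nat (pp (y + c - c)) * of_nat (dd (N - (y + c))) :: bit))"
  proof -
    have "{c..N} = {0 + c..(N - c) + c}" using True c_def by simp
    then show ?thesis by (simp only: sum.shift_bounds_cl_nat_ivl)
  qed
  also have "\<dots> = (\<Sum>y\<le>N - c. (of_nat (pp y * dd (N - c - y)) :: bit))"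
    by (intro sum.cong) (auto simp: add.commute)
  also have "\<dots> = of_bool (N - c = 0)" by (rule PD_bit)
  finally show ?thesis using True c_def by simp
qed

lemma key: "(\<Sum>x\<le>N. (of_nat (card {L \<in> partitions x. even (Jb b L)}) * of_nat (dd (N - x)) :: bit))
   = of_bool (\<exists>j. sb b j = N)"
proof -
  have "(\<Sum>x\<le>N. (of_nat (card {L \<in> partitions x. even (Jb b L)}) * of_nat (dd (N - x)) :: bit))
     = (\<Sum>x\<le>N. (\<Sum>j\<le>N. of_nat (G' j x)) * of_nat (dd (N - x)))"
  proof (rule sum.cong)
    fix x assume x: "x \<in> {..N}"
    have "(of_nat (card {L \<in> partitions x. even (Jb b L)}) :: bit) = (\<Sum>j\<le>x. of_nat (G' j x))"
      unfolding parity_sum G'_def by simp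
    also have "\<dots> = (\<Sum>j\<le>N. of_nat (G' j x))"
    proof (rule sum.mono_neutral_left)
      show "\<forall>j\<in>{..N} - {..x}. (of_nat (G' j x) :: bit) = 0"
        using sb_ge unfolding G'_def by (auto simp: not_le) (meson le_trans not_less)
    qed (use x in auto)
    finally show "(of_nat (card {L \<in> partitions x. even (Jb b L)}) * of_nat (dd (N - x)) :: bit)
       = (\<Sum>j\<le>N. of_nat (G' j x)) * of_nat (dd (N - x))" by simp
  qed simp
  also have "\<dots> = (\<Sum>x\<le>N. \<Sum>j\<le>N. (of_nat (G' j x) * of_nat (dd (N - x)) :: bit))"
    by (simp add: sum_distrib_right)
  also have "\<dots> = (\<Sum>j\<le>N. \<Sum>x\<le>N. (of_nat (G' j x) * of_nat (dd (N - x)) :: bit))"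
    by (rule sum.swap)
  also have "\<dots> = (\<Sum>j\<le>N. (of_bool (sb b j = N) :: bit))"
    using inner by simp
  also have "\<dots> = of_bool (\<exists>j. sb b j = N)"
  proof (cases "\<exists>j. sb b j = N")
    case True
    then obtain j0 where j0: "sb b j0 = N" by blast
    have "\<And>j. sb b j = N \<longleftrightarrow> j = j0" using j0 sb_smono strict_mono_eq by metis
    then have "(\<Sum>j\<le>N. (of_bool (sb b j = N) :: bit)) = (\<Sum>j\<le>N. if j = j0 then 1 else 0)"
      by (intro sum.cong) auto
    also have "\<dots> = 1" using sb_ge[of j0] j0 by simp
    finally show ?thesis using True by simp
  next
    case False then show ?thesis by simp
  qed
  finally show ?thesis .
qed

end

lemma res_char:
  fixes m p k :: nat
  assumes m: "0 < m" and p: "0 < p"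
  shows "(0 < k \<and> k mod (m*p) = p mod (m*p)) \<longleftrightarrow> (\<exists>i. k = p + i*(m*p))"
proof
  assume a: "0 < k \<and> k mod (m*p) = p mod (m*p)"
  have pA: "p \<le> m*p" using m by simp
  show "\<exists>i. k = p + i*(m*p)"
  proof (cases "p \<le> k")
    case True
    have e: "k mod (m*p) = p mod (m*p)" using a by blast
    then have "m*p dvd k - p" using mod_eq_dvd_iff_nat[OF True, of "m*p"] by blast
    then obtain i where "k - p = m*p*i" by (auto elim: dvdE)
    then show ?thesis using True by (intro exI[of _ i]) (simp add: algebra_simps)
  next
    case False
    then have kA: "k < m*p" using pA by linarith
    then have "k mod (m*p) = k" by simp
    show ?thesis
    proof (cases "p < m*p")
      case True then have "p mod (m*p) = p" by simp
      then show ?thesis using a kA False by simp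
    next
      case False then have "p = m*p" using pA by linarith
      then have "p mod (m*p) = 0" by (metis mod_self)
      then show ?thesis using a kA by simp
    qed
  qed
next
  assume "\<exists>i. k = p + i*(m*p)"
  then show "0 < k \<and> k mod (m*p) = p mod (m*p)" using p by auto
qed

locale mexset =
  fixes m p :: nat
  assumes m: "0 < m" and p: "0 < p"
begin

definition bb :: "nat \<Rightarrow> nat" where "bb i = p + i * (m * p)"

lemma bseq_bb: "bseq bb"
proof
  show "strict_mono bb" by (rule strict_monoI_Suc) (simp add: bb_def m p)
  show "0 < bb 0" by (simp add: bb_def p)
qed

interpretation B: bseq bb by (rule bseq_bb)

lemma mex_bb: "mex (m*p) p L = bb (Jb bb L)"
  unfolding mex_def
proof (rule Least_equality)
  show "0 < bb (Jb bb L) \<and> bb (Jb bb L) mod (m * p) = p mod (m * p) \<and> bb (Jb bb L) \<notin># L"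
    using res_char[OF m p, of "bb (Jb bb L)"] B.J_notin unfolding bb_def by auto
next
  fix y assume y: "0 < y \<and> y mod (m * p) = p mod (m * p) \<and> y \<notin># L"
  then obtain i where i: "y = bb i" using res_char[OF m p, of y] unfolding bb_def by auto
  then have "Jb bb L \<le> i" unfolding Jb_def using y by (intro Least_le) simp
  then show "bb (Jb bb L) \<le> y" unfolding i bb_def by simp
qed

lemma mex_even: "mex (m*p) p L mod (2 * (m*p)) = p mod (2 * (m*p)) \<longleftrightarrow> even (Jb bb L)"
proof -
  define J where "J = Jb bb L"
  have "(p + J*(m*p)) mod (2*(m*p)) = p mod (2*(m*p)) \<longleftrightarrow> 2*(m*p) dvd J*(m*p)"
    using mod_eq_dvd_iff_nat[of p "p + J*(m*p)" "2*(m*p)"] by simp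
  also have "\<dots> \<longleftrightarrow> 2 dvd J" using m p by simp
  finally show ?thesis unfolding mex_bb bb_def J_def .
qed

lemma p_mex_eq: "p_mex (m*p) p n = card {L \<in> partitions n. even (Jb bb L)}"
  unfolding p_mex_def using mex_even by simp

lemma sb_dvd: "p dvd sb bb j"
  unfolding sb_def bb_def by (intro dvd_sum) simp

lemma key2: "(\<Sum>x\<le>N. (of_bool (odd (p_mex (m*p) p x) \<and> Pent (N - x)) :: bit)) = of_bool (\<exists>j. sb bb j = N)"
proof -
  have "(\<Sum>x\<le>N. (of_bool (odd (p_mex (m*p) p x) \<and> Pent (N - x)) :: bit))
     = (\<Sum>x\<le>N. (of_nat (card {L \<in> partitions x. even (Jb bb L)}) * of_nat (dd (N - x)) :: bit))"
    by (intro sum.cong refl) (simp add: of_nat_bit p_mex_eq dd_parity)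
  also have "\<dots> = of_bool (\<exists>j. sb bb j = N)" by (rule B.key)
  finally show ?thesis .
qed

end

lemma pb_mono: "i \<le> j \<Longrightarrow> pb i \<le> pb j"
  using pb_smono strict_mono_less_eq by blast

lemma pent_gap:
  assumes "pa k < y" "y < pa k + k"
  shows "\<not> Pent y"
proof
  assume "Pent y"
  then obtain j where "y = pa j \<or> y = pb j" unfolding Pent_def by blast
  then show False
  proof
    assume y: "y = pa j"
    show False
    proof (cases "j \<le> k")
      case True then show False using pa_mono[OF True] y assms by simp
    next
      case False then have "pa (Suc k) \<le> pa j" by (intro pa_mono) simp
      then show False using y assms by simp
    qed
  next
    assume y: "y = pb j"
    show False
    proof (cases "k \<le> j")
      case True then show False using pb_mono[OF True] y assms by (simp add: pb_def)
    next
      case False then have "pa (Suc j) \<le> pa k" by (intro pa_mono) simp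
      then show False using y assms pb_lt_pa[of j] by simp
    qed
  qed
qed

lemma pa_bound: "2 * pa k + k = 3 * k * k"
  by (induction k) (auto simp: algebra_simps)

context mexset
begin

abbreviation O' :: "nat \<Rightarrow> bool" where "O' x \<equiv> odd (p_mex (m*p) p x)"

lemma O0: "O' 0"
proof -
  have "(\<Sum>x\<le>0. (of_bool (O' x \<and> Pent (0 - x)) :: bit)) = of_bool (\<exists>j. sb bb j = 0)" by (rule key2)
  moreover have "(\<Sum>x\<le>0. (of_bool (O' x \<and> Pent (0 - x)) :: bit)) = of_bool (O' 0 \<and> Pent (0 - 0))"
    by (simp only: atMost_0 sum.insert_if finite.emptyI sum.empty) simp
  moreover have "\<exists>j. sb bb j = 0" using sb_def by (intro exI[of _ 0]) simp
  ultimately have "(of_bool (O' 0 \<and> Pent (0 - 0)) :: bit) = 1" by simp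
  then show ?thesis by (cases "O' 0") auto
qed

lemma step:
  assumes nd3: "\<not> p dvd 3" and c: "O' c"
  shows "\<exists>c'. O' c' \<and> c < c' \<and> c' \<le> c + pa (c + 3)"
proof (rule ccontr)
  assume H: "\<not> (\<exists>c'. O' c' \<and> c < c' \<and> c' \<le> c + pa (c + 3))"
  have dv: "p dvd c + pa k" if k: "c < k" "k \<le> c + 3" for k
  proof -
    define N where "N = c + pa k"
    have set: "{x \<in> {..N}. O' x \<and> Pent (N - x)} = {c}"
    proof
      show "{c} \<subseteq> {x \<in> {..N}. O' x \<and> Pent (N - x)}"
        using c unfolding N_def Pent_def by auto
      show "{x \<in> {..N}. O' x \<and> Pent (N - x)} \<subseteq> {c}"
      proof
        fix x assume x: "x \<in> {x \<in> {..N}. O' x \<and> Pent (N - x)}"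
        have "\<not> x < c"
        proof
          assume xc: "x < c"
          have "pa k < N - x" "N - x < pa k + k" using xc k unfolding N_def by auto
          then show False using pent_gap x by blast
        qed
        moreover have "\<not> c < x"
        proof
          assume xc: "c < x"
          have "pa k \<le> pa (c + 3)" using k by (intro pa_mono) simp
          then have "x \<le> c + pa (c + 3)" using x unfolding N_def by auto
          then show False using H x xc by blast
        qed
        ultimately show "x \<in> {c}" by simp
      qed
    qed
    have "(\<Sum>x\<le>N. (of_bool (O' x \<and> Pent (N - x)) :: bit)) = of_nat (card {x \<in> {..N}. O' x \<and> Pent (N - x)})"
      by (rule of_nat_card_filter[symmetric]) simp
    also have "\<dots> = 1" unfolding set by simp
    finally have "(of_bool (\<exists>j. sb bb j = N) :: bit) = 1" using key2 by simp
    then obtain j where "sb bb j = N" by (cases "\<exists>j. sb bb j = N") auto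
    then show ?thesis using sb_dvd[of j] unfolding N_def by simp
  qed
  have d1: "p dvd c + pa (c + 1)" using dv[of "c + 1"] by simp
  have d2: "p dvd c + pa (c + 1) + (3 * c + 4)" using dv[of "c + 2"] by (simp add: numeral_eq_Suc algebra_simps)
  have d3: "p dvd (c + pa (c + 1) + (3 * c + 4)) + ((3 * c + 4) + 3)"
    using dv[of "c + 3"] by (simp add: numeral_eq_Suc algebra_simps)
  have "p dvd 3 * c + 4" using d2 dvd_add_right_iff[OF d1] by blast
  moreover have "p dvd (3 * c + 4) + 3" using d3 dvd_add_right_iff[OF d2] by blast
  ultimately have "p dvd 3" by (simp only: dvd_add_right_iff)
  then show False using nd3 by simp
qed

end

context mexset
begin

primrec ch :: "nat \<Rightarrow> nat" where
  "ch 0 = 0"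
| "ch (Suc i) = (SOME x. O' x \<and> ch i < x \<and> 2 * (x + 3) \<le> (2 * (ch i + 3))^2)"

lemma grow_bound:
  assumes "c' \<le> c + pa (c + 3)"
  shows "2 * (c' + 3) \<le> (2 * (c + 3))^2"
proof -
  define u where "u = c + 3"
  have u2: "2 \<le> u" unfolding u_def by simp
  have a: "2 * pa u + u = 3 * u * u" by (rule pa_bound)
  have b: "2 * u \<le> u * u" using mult_le_mono1[OF u2, of u] by simp
  have c: "(2 * (c + 3))^2 = 4 * (u * u)" unfolding u_def by (simp add: power2_eq_square algebra_simps)
  have "2 * (c' + 3) \<le> 2 * u + 2 * pa u" using assms unfolding u_def by simp
  then show ?thesis unfolding c using a b by linarith
qed

lemma ch_step:
  assumes nd3: "\<not> p dvd 3" and O: "O' (ch i)"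
  shows "O' (ch (Suc i)) \<and> ch i < ch (Suc i) \<and> 2 * (ch (Suc i) + 3) \<le> (2 * (ch i + 3))^2"
proof -
  obtain c' where c': "O' c'" "ch i < c'" "c' \<le> ch i + pa (ch i + 3)" using step[OF nd3 O] by blast
  have "\<exists>x. O' x \<and> ch i < x \<and> 2 * (x + 3) \<le> (2 * (ch i + 3))^2"
    using c' grow_bound[OF c'(3)] by blast
  then show ?thesis unfolding ch.simps by (rule someI_ex)
qed

lemma ch_props:
  assumes nd3: "\<not> p dvd 3"
  shows "O' (ch i) \<and> 2 * (ch i + 3) \<le> 6^(2^i)"
proof (induction i)
  case 0 then show ?case using O0 by simp
next
  case (Suc i)
  have s: "O' (ch (Suc i)) \<and> ch i < ch (Suc i) \<and> 2 * (ch (Suc i) + 3) \<le> (2 * (ch i + 3))^2"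
    using ch_step[OF nd3] Suc by blast
  have "(2 * (ch i + 3))^2 \<le> (6^(2^i))^2" using Suc by (intro power_mono) auto
  also have "\<dots> = 6^(2^Suc i)" by (simp add: power_mult[symmetric] mult.commute)
  finally show ?case using s by linarith
qed

lemma ch_smono:
  assumes nd3: "\<not> p dvd 3"
  shows "strict_mono ch"
proof (rule strict_monoI_Suc)
  fix i show "ch i < ch (Suc i)" using ch_step[OF nd3] ch_props[OF nd3] by blast
qed

lemma count_ge:
  assumes nd3: "\<not> p dvd 3" and X: "real ((6::nat)^(2^r)) \<le> X"
  shows "r \<le> card {n::nat. 1 \<le> n \<and> real n \<le> X \<and> O' n}"
proof -
  let ?S = "{n::nat. 1 \<le> n \<and> real n \<le> X \<and> O' n}"
  have finS: "finite ?S"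
  proof (rule finite_subset)
    show "?S \<subseteq> {..nat \<lceil>X\<rceil>}"
    proof
      fix n assume "n \<in> ?S"
      then have "real n \<le> X" by simp
      then have "int n \<le> \<lceil>X\<rceil>" by linarith
      then show "n \<in> {..nat \<lceil>X\<rceil>}" by simp
    qed
  qed simp
  have sub: "ch ` {1..r} \<subseteq> ?S"
  proof
    fix y assume "y \<in> ch ` {1..r}"
    then obtain i where i: "i \<in> {1..r}" "y = ch i" by blast
    have "ch 0 < ch i" using strict_monoD[OF ch_smono[OF nd3], of 0 i] i(1) by simp
    then have y1: "1 \<le> y" using i by simp
    have "2 * (ch i + 3) \<le> 6^(2^i)" using ch_props[OF nd3] by blast
    also have "(6::nat)^(2^i) \<le> 6^(2^r)" using i by (intro power_increasing) auto
    finally have "y \<le> 6^(2^r)" using i by simp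
    then have "real y \<le> real (6^(2^r))" by (simp only: of_nat_le_iff)
    then have "real y \<le> X" using X by linarith
    then show "y \<in> ?S" using y1 ch_props[OF nd3] i by auto
  qed
  have "card (ch ` {1..r}) = r"
    using strict_mono_imp_inj_on[OF ch_smono[OF nd3]] by (simp add: card_image inj_on_subset)
  then show ?thesis using card_mono[OF finS sub] by simp
qed

end

theorem theorem1p2:
  fixes m p :: nat
  assumes "0 < m" and "prime p" and "m mod 3 \<noteq> 0" and "p mod 3 = 1"
  shows "\<exists>\<beta>::real. \<beta> > 0 \<and>
    (\<forall>\<^sub>F X in at_top. real (card {n::nat. 1 \<le> n \<and> real n \<le> X \<and> odd (p_mex (m * p) p n)})
        \<ge> \<beta> * ln (ln X))"
proof -
  have p0: "0 < p" using assms(2) prime_gt_0_nat by blast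
  interpret mexset m p by unfold_locales (use assms(1) p0 in auto)
  have nd3: "\<not> p dvd 3"
  proof
    assume "p dvd 3" then have "p \<le> 3" by (rule dvd_imp_le) simp
    moreover have "2 \<le> p" using assms(2) prime_ge_2_nat by blast
    ultimately have "p = 2 \<or> p = 3" by auto
    then show False using assms(4) by auto
  qed
  show ?thesis
  proof (intro exI[of _ "1/2"] conjI)
    show "(1/2::real) > 0" by simp
    show "\<forall>\<^sub>F X in at_top. real (card {n::nat. 1 \<le> n \<and> real n \<le> X \<and> odd (p_mex (m * p) p n)})
        \<ge> 1/2 * ln (ln X)"
      unfolding eventually_at_top_linorder
    proof (intro exI[of _ "exp (exp 8)"] allI impI)
      fix X :: real assume X: "exp (exp 8) \<le> X"
      define L where "L = ln X"
      have Xpos: "0 < X" using X by (meson exp_gt_zero less_le_trans)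
      have L8: "exp 8 \<le> L" unfolding L_def using X Xpos by (metis exp_gt_zero ln_exp ln_le_cancel_iff)
      have Lpos: "0 < L" using L8 by (meson exp_gt_zero less_le_trans)
      have lnL: "8 \<le> ln L" using L8 Lpos by (metis exp_gt_zero ln_exp ln_le_cancel_iff)
      have ln2: "0 < ln (2::real)" "ln (2::real) \<le> 1" using ln_le_minus_one[of 2] by auto
      have lg: "ln L \<le> log 2 L"
      proof -
        have "ln L * ln 2 \<le> ln L" using lnL ln2 by (simp add: mult_left_le)
        then show ?thesis unfolding log_def using ln2 by (simp add: le_divide_eq)
      qed
      define t where "t = \<lfloor>log 2 L\<rfloor>"
      have t1: "real_of_int t \<le> log 2 L" unfolding t_def by (rule of_int_floor_le)
      have t2: "log 2 L - 1 < real_of_int t" unfolding t_def by (rule real_of_int_floor_gt_diff_one)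
      have t8: "8 \<le> t" using t2 lg lnL by linarith
      define r where "r = nat t - 3"
      have rt: "r + 3 = nat t" unfolding r_def using t8 by simp
      have rr: "real r = real_of_int t - 3" unfolding r_def using t8 by simp
      have "(2::real) ^ (r + 3) = 2 powr (real (nat t))" unfolding rt by (simp add: powr_realpow)
      also have "\<dots> = 2 powr (real_of_int t)" using t8 by simp
      also have "\<dots> \<le> 2 powr (log 2 L)" using t1 by (intro powr_mono) auto
      also have "\<dots> = L" using Lpos by simp
      finally have pL: "(2::real) ^ (r + 3) \<le> L" .
      have "ln ((6::real) ^ (2 ^ r)) = 2 ^ r * ln 6" by (simp add: ln_realpow)
      also have "\<dots> \<le> 2 ^ r * 8" using ln_le_minus_one[of 6] by (intro mult_left_mono) auto
      also have "\<dots> = 2 ^ (r + 3)" by (simp add: power_add)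
      also have "\<dots> \<le> ln X" using pL unfolding L_def .
      finally have "(6::real) ^ (2 ^ r) \<le> X" using Xpos by (simp add: ln_le_cancel_iff)
      then have "real ((6::nat) ^ (2 ^ r)) \<le> X" by simp
      then have cr: "r \<le> card {n::nat. 1 \<le> n \<and> real n \<le> X \<and> odd (p_mex (m * p) p n)}"
        by (rule count_ge[OF nd3])
      have "1/2 * ln (ln X) \<le> real r" unfolding L_def[symmetric] using rr t2 lg lnL by linarith
      then show "1/2 * ln (ln X) \<le> real (card {n::nat. 1 \<le> n \<and> real n \<le> X \<and> odd (p_mex (m * p) p n)})"
        using cr by linarith
    qed
  qed
qed

end
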